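(* Let $G$ be a finitely generated amenable group, and let $F=(F_n)_{n=1}^\infty$ be a sequence of finite subsets of $G$ that is both a left- and a right-Følner sequence. Then $\textup{cr}_F(G)=\textup{dc}_F(G)$.
   Context: $F$ is left-Følner if $|xF_n\triangle F_n|/|F_n|\to0$ for every $x\in G$, right-Følner if $|F_nx\triangle F_n|/|F_n|\to0$ for every $x\in G$. Writing $\mathcal{C}(G)$ for the set of conjugacy classes of $G$, $\textup{cr}_F(G)=\limsup_{n\to\infty}\frac{|\{C\in\mathcal{C}(G):C\cap F_n\ne\varnothing\}|}{|F_n|}$. $\textup{dc}_F(G)=\limsup_{n\to\infty}(\mu_n\times\mu_n)(\{(x,y):xy=yx\})$, where $\mu_n$ is the uniform probability measure on $F_n$. *)

theory Defs
  imports "HOL-Algebra.Algebra" "HOL-Library.Liminf_Limsup" "HOL-Library.Extended_Real"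
begin

definition fin_gen_group :: "('a, 'b) monoid_scheme \<Rightarrow> bool" where
  "fin_gen_group G \<longleftrightarrow> group G \<and>
     (\<exists>S. finite S \<and> S \<subseteq> carrier G \<and> generate G S = carrier G)"

definition amenable_group :: "('a, 'b) monoid_scheme \<Rightarrow> bool" where
  "amenable_group G \<longleftrightarrow> group G \<and>
     (\<exists>m :: 'a set \<Rightarrow> real.
        (\<forall>A. A \<subseteq> carrier G \<longrightarrow> m A \<ge> 0) \<and>
        m (carrier G) = 1 \<and>
        (\<forall>A B. A \<subseteq> carrier G \<longrightarrow> B \<subseteq> carrier G \<longrightarrow> A \<inter> B = {} \<longrightarrow> m (A \<union> B) = m A + m B) \<and>
        (\<forall>g A. g \<in> carrier G \<longrightarrow> A \<subseteq> carrier G \<longrightarrow> m (g <#\<^bsub>G\<^esub> A) = m A))"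

definition sym_diff_set :: "'a set \<Rightarrow> 'a set \<Rightarrow> 'a set" where
  "sym_diff_set A B = (A - B) \<union> (B - A)"

text \<open>A sequence of nonempty finite subsets of G (indexed from n = 1 in the paper;
  the index shift is immaterial for limits).\<close>
definition fin_subset_seq :: "('a, 'b) monoid_scheme \<Rightarrow> (nat \<Rightarrow> 'a set) \<Rightarrow> bool" where
  "fin_subset_seq G F \<longleftrightarrow> (\<forall>n. finite (F n) \<and> F n \<noteq> {} \<and> F n \<subseteq> carrier G)"

definition left_folner :: "('a, 'b) monoid_scheme \<Rightarrow> (nat \<Rightarrow> 'a set) \<Rightarrow> bool" where
  "left_folner G F \<longleftrightarrow> fin_subset_seq G F \<and>
     (\<forall>x \<in> carrier G.
        (\<lambda>n. real (card (sym_diff_set (x <#\<^bsub>G\<^esub> F n) (F n))) / real (card (F n))) \<longlonglongrightarrow> 0)"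

definition right_folner :: "('a, 'b) monoid_scheme \<Rightarrow> (nat \<Rightarrow> 'a set) \<Rightarrow> bool" where
  "right_folner G F \<longleftrightarrow> fin_subset_seq G F \<and>
     (\<forall>x \<in> carrier G.
        (\<lambda>n. real (card (sym_diff_set (F n #>\<^bsub>G\<^esub> x) (F n))) / real (card (F n))) \<longlonglongrightarrow> 0)"

definition conj_class :: "('a, 'b) monoid_scheme \<Rightarrow> 'a \<Rightarrow> 'a set" where
  "conj_class G x = {g \<otimes>\<^bsub>G\<^esub> x \<otimes>\<^bsub>G\<^esub> inv\<^bsub>G\<^esub> g | g. g \<in> carrier G}"

definition conj_classes :: "('a, 'b) monoid_scheme \<Rightarrow> 'a set set" where
  "conj_classes G = conj_class G ` carrier G"

definition conj_ratio :: "('a, 'b) monoid_scheme \<Rightarrow> (nat \<Rightarrow> 'a set) \<Rightarrow> ereal" where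
  "conj_ratio G F = limsup (\<lambda>n.
     ereal (real (card {C \<in> conj_classes G. C \<inter> F n \<noteq> {}}) / real (card (F n))))"

text \<open>Degree of commutativity: (mu_n x mu_n) of commuting pairs, mu_n uniform on F n.\<close>
definition deg_comm :: "('a, 'b) monoid_scheme \<Rightarrow> (nat \<Rightarrow> 'a set) \<Rightarrow> ereal" where
  "deg_comm G F = limsup (\<lambda>n.
     ereal (real (card {(x, y) \<in> F n \<times> F n. x \<otimes>\<^bsub>G\<^esub> y = y \<otimes>\<^bsub>G\<^esub> x}) / (real (card (F n)))^2))"

end

theory Submission
  imports Defs
begin


primrec ballG :: "('a, 'b) monoid_scheme \<Rightarrow> 'a set \<Rightarrow> nat \<Rightarrow> 'a set" where
  "ballG G T 0 = {\<one>\<^bsub>G\<^esub>}"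
| "ballG G T (Suc j) = (\<lambda>(t, b). t \<otimes>\<^bsub>G\<^esub> b) ` (T \<times> ballG G T j)"

context group begin

lemma inv_cancel_left': "g \<in> carrier G \<Longrightarrow> w \<in> carrier G \<Longrightarrow> inv g \<otimes> (g \<otimes> w) = w"
  by (simp add: m_assoc[symmetric])

lemma conj_class_self: "x \<in> carrier G \<Longrightarrow> x \<in> conj_class G x"
  unfolding conj_class_def by (rule CollectI, rule exI[of _ \<one>]) auto

lemma conj_class_sub: "x \<in> carrier G \<Longrightarrow> conj_class G x \<subseteq> carrier G"
  unfolding conj_class_def by auto

lemma conj_class_mem_eq:
  assumes x: "x \<in> carrier G" and y: "y \<in> conj_class G x"
  shows "conj_class G y = conj_class G x"
proof -
  obtain g where g: "g \<in> carrier G" "y = g \<otimes> x \<otimes> inv g" using y unfolding conj_class_def by auto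
  show ?thesis
  proof
    show "conj_class G y \<subseteq> conj_class G x"
    proof
      fix z assume "z \<in> conj_class G y"
      then obtain h where h: "h \<in> carrier G" "z = h \<otimes> y \<otimes> inv h" unfolding conj_class_def by auto
      have "z = (h \<otimes> g) \<otimes> x \<otimes> inv (h \<otimes> g)"
        using g h x by (simp add: inv_mult_group m_assoc)
      then show "z \<in> conj_class G x" unfolding conj_class_def using g h by auto
    qed
  next
    show "conj_class G x \<subseteq> conj_class G y"
    proof
      fix z assume "z \<in> conj_class G x"
      then obtain h where h: "h \<in> carrier G" "z = h \<otimes> x \<otimes> inv h" unfolding conj_class_def by auto
      have "z = (h \<otimes> inv g) \<otimes> y \<otimes> inv (h \<otimes> inv g)"
        using g h x by (simp add: inv_mult_group m_assoc inv_cancel_left')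
      then show "z \<in> conj_class G y" unfolding conj_class_def using g h by auto
    qed
  qed
qed

lemma ballG_sub: "T \<subseteq> carrier G \<Longrightarrow> ballG G T j \<subseteq> carrier G"
  by (induction j) auto

lemma ballG_finite: "finite T \<Longrightarrow> finite (ballG G T j)"
  by (induction j) auto

lemma ballG_one: "\<one> \<in> T \<Longrightarrow> \<one> \<in> ballG G T j"
  by (induction j) (auto intro!: image_eqI[of _ _ "(\<one>, \<one>)"])

lemma ballG_conj_Suc:
  assumes T: "T \<subseteq> carrier G" and x: "x \<in> carrier G"
  shows "(\<lambda>g. g \<otimes> x \<otimes> inv g) ` ballG G T (Suc j) =
    (\<lambda>(t, z). t \<otimes> z \<otimes> inv t) ` (T \<times> (\<lambda>g. g \<otimes> x \<otimes> inv g) ` ballG G T j)"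
proof -
  have B: "ballG G T j \<subseteq> carrier G" using ballG_sub[OF T] .
  have eq: "(t \<otimes> b) \<otimes> x \<otimes> inv (t \<otimes> b) = t \<otimes> (b \<otimes> x \<otimes> inv b) \<otimes> inv t"
    if "t \<in> carrier G" "b \<in> carrier G" for t b
    using that x by (simp add: inv_mult_group m_assoc)
  show ?thesis using T B
    by (auto simp: eq image_iff) (metis (no_types, lifting) eq subsetD)+
qed

lemma conj_ball_lemma:
  assumes S: "finite S" "S \<subseteq> carrier G" "generate G S = carrier G"
    and T: "T = insert \<one> (S \<union> (\<lambda>s. inv s) ` S)" and x: "x \<in> carrier G"
  shows "(\<lambda>g. g \<otimes> x \<otimes> inv g) ` ballG G T j = conj_class G x
       \<or> card ((\<lambda>g. g \<otimes> x \<otimes> inv g) ` ballG G T j) \<ge> Suc j"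
proof (induction j)
  case 0
  then show ?case by simp
next
  case (Suc j)
  have Tc: "T \<subseteq> carrier G" using S T by auto
  define V where "V = (\<lambda>j. (\<lambda>g. g \<otimes> x \<otimes> inv g) ` ballG G T j)"
  have Vsub: "V i \<subseteq> conj_class G x" for i
    unfolding V_def conj_class_def using ballG_sub[OF Tc] by auto
  have Vfin: "finite (V i)" for i unfolding V_def using ballG_finite S T by auto
  have VSuc: "V (Suc i) = (\<lambda>(t, z). t \<otimes> z \<otimes> inv t) ` (T \<times> V i)" for i
    unfolding V_def by (rule ballG_conj_Suc[OF Tc x])
  have Vmono: "V i \<subseteq> V (Suc i)" for i
  proof
    fix z assume "z \<in> V i"
    moreover have "z \<in> carrier G" using Vsub conj_class_sub x \<open>z \<in> V i\<close> by blast
    ultimately show "z \<in> V (Suc i)" unfolding VSuc using T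
      by (auto intro!: image_eqI[of _ _ "(\<one>, z)"])
  qed
  show ?case
  proof (cases "V j = conj_class G x")
    case True
    then have "V (Suc j) = conj_class G x" using Vmono[of j] Vsub[of "Suc j"] by auto
    then show ?thesis unfolding V_def by simp
  next
    case False
    note nc = False
    with Suc.IH have cj: "card (V j) \<ge> Suc j" unfolding V_def by simp
    show ?thesis
    proof (cases "V (Suc j) = V j")
      case True
      have Vc: "V j \<subseteq> carrier G" using Vsub conj_class_sub x by blast
      have clo: "\<forall>z \<in> V j. g \<otimes> z \<otimes> inv g \<in> V j" if "g \<in> generate G S" for g
        using that
      proof (induction rule: generate.induct)
        case one
        then show ?case using Vc by auto
      next
        case (incl h)
        then show ?case using True unfolding VSuc using T by (auto intro!: image_eqI[of _ _ "(h, _)"])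
      next
        case (inv h)
        then show ?case using True unfolding VSuc using T by (auto intro!: image_eqI[of _ _ "(inv h, _)"])
      next
        case (eng h1 h2)
        have h: "h1 \<in> carrier G" "h2 \<in> carrier G" using eng.hyps S by auto
        show ?case
        proof
          fix z assume z: "z \<in> V j"
          have zc: "z \<in> carrier G" using z Vc by auto
          have "h1 \<otimes> h2 \<otimes> z \<otimes> inv (h1 \<otimes> h2) = h1 \<otimes> (h2 \<otimes> z \<otimes> inv h2) \<otimes> inv h1"
            using h zc by (simp add: inv_mult_group m_assoc)
          then show "h1 \<otimes> h2 \<otimes> z \<otimes> inv (h1 \<otimes> h2) \<in> V j" using eng.IH z by auto
        qed
      qed
      have xV: "x \<in> V j" unfolding V_def using ballG_one[of T j] T x
        by (auto intro!: image_eqI[of _ _ \<one>])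
      have "conj_class G x \<subseteq> V j"
      proof
        fix y assume "y \<in> conj_class G x"
        then obtain g where "g \<in> carrier G" "y = g \<otimes> x \<otimes> inv g" unfolding conj_class_def by auto
        then show "y \<in> V j" using clo[of g] xV S by auto
      qed
      then show ?thesis using nc Vsub[of j] by blast
    next
      case False
      then have "V j \<subset> V (Suc j)" using Vmono by auto
      then have "card (V j) < card (V (Suc j))" using Vfin psubset_card_mono by blast
      then show ?thesis using cj unfolding V_def by simp
    qed
  qed
qed

end



lemma card_filter_diff:
  assumes "finite A" "finite B"
  shows "\<bar>real (card {w\<in>A. P w}) - real (card {w\<in>B. P w})\<bar> \<le> real (card (sym_diff_set A B))"
proof -
  have 1: "card {w\<in>A. P w} \<le> card {w\<in>B. P w} + card (A - B)"
  proof -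
    have "{w\<in>A. P w} \<subseteq> {w\<in>B. P w} \<union> (A - B)" by auto
    then have "card {w\<in>A. P w} \<le> card ({w\<in>B. P w} \<union> (A - B))"
      using assms by (intro card_mono) auto
    also have "\<dots> \<le> card {w\<in>B. P w} + card (A - B)" by (rule card_Un_le)
    finally show ?thesis .
  qed
  have 2: "card {w\<in>B. P w} \<le> card {w\<in>A. P w} + card (B - A)"
  proof -
    have "{w\<in>B. P w} \<subseteq> {w\<in>A. P w} \<union> (B - A)" by auto
    then have "card {w\<in>B. P w} \<le> card ({w\<in>A. P w} \<union> (B - A))"
      using assms by (intro card_mono) auto
    also have "\<dots> \<le> card {w\<in>A. P w} + card (B - A)" by (rule card_Un_le)
    finally show ?thesis .
  qed
  have 3: "card (sym_diff_set A B) = card (A - B) + card (B - A)"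
    unfolding sym_diff_set_def using assms by (intro card_Un_disjoint) auto
  show ?thesis using 1 2 3 by linarith
qed

context group begin

lemma inv_cancel_left'': "g \<in> carrier G \<Longrightarrow> w \<in> carrier G \<Longrightarrow> g \<otimes> (inv g \<otimes> w) = w"
  by (simp add: m_assoc[symmetric])

lemma inj_lmult: assumes "a \<in> carrier G" "A \<subseteq> carrier G" shows "inj_on (\<lambda>y. a \<otimes> y) A"
proof (rule inj_onI)
  fix u v assume "u \<in> A" "v \<in> A" "a \<otimes> u = a \<otimes> v"
  then show "u = v" using assms l_cancel[of a u v] by auto
qed

lemma l_coset_finite: "finite F \<Longrightarrow> finite (a <# F)"
  unfolding l_coset_def by auto

lemma r_coset_finite: "finite F \<Longrightarrow> finite (F #> a)"
  unfolding r_coset_def by auto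

lemma comm_iff_conj:
  assumes "w \<in> carrier G" "x \<in> carrier G"
  shows "(w \<otimes> x \<otimes> inv w = x) \<longleftrightarrow> (x \<otimes> w = w \<otimes> x)"
proof
  assume h: "w \<otimes> x \<otimes> inv w = x"
  have "w \<otimes> x = (w \<otimes> x \<otimes> inv w) \<otimes> w" using assms by (simp add: m_assoc)
  then show "x \<otimes> w = w \<otimes> x" using h by simp
next
  assume h: "x \<otimes> w = w \<otimes> x"
  have "w \<otimes> x \<otimes> inv w = x \<otimes> w \<otimes> inv w" using h by simp
  then show "w \<otimes> x \<otimes> inv w = x" using assms by (simp add: m_assoc)
qed

lemma fiber_card:
  assumes F: "finite F" "F \<subseteq> carrier G" and g: "g \<in> carrier G" and x: "x \<in> carrier G"
  shows "\<bar>real (card {y\<in>F. y \<otimes> x \<otimes> inv y = g \<otimes> x \<otimes> inv g}) - real (card {y\<in>F. x \<otimes> y = y \<otimes> x})\<bar>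
         \<le> real (card (sym_diff_set (inv g <# F) F))"
proof -
  have eq1: "card {y\<in>F. y \<otimes> x \<otimes> inv y = g \<otimes> x \<otimes> inv g} = card {w \<in> inv g <# F. w \<otimes> x \<otimes> inv w = x}"
  proof -
    have "{w \<in> inv g <# F. w \<otimes> x \<otimes> inv w = x} = (\<lambda>y. inv g \<otimes> y) ` {y\<in>F. y \<otimes> x \<otimes> inv y = g \<otimes> x \<otimes> inv g}"
    proof -
      have key: "(inv g \<otimes> y) \<otimes> x \<otimes> inv (inv g \<otimes> y) = x \<longleftrightarrow> y \<otimes> x \<otimes> inv y = g \<otimes> x \<otimes> inv g"
        if y: "y \<in> carrier G" for y
      proof -
        have e: "(inv g \<otimes> y) \<otimes> x \<otimes> inv (inv g \<otimes> y) = inv g \<otimes> (y \<otimes> x \<otimes> inv y) \<otimes> g"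
          using g x y by (simp add: inv_mult_group m_assoc)
        have "inv g \<otimes> (y \<otimes> x \<otimes> inv y) \<otimes> g = x \<longleftrightarrow> y \<otimes> x \<otimes> inv y = g \<otimes> x \<otimes> inv g"
        proof
          assume h: "inv g \<otimes> (y \<otimes> x \<otimes> inv y) \<otimes> g = x"
          have "y \<otimes> x \<otimes> inv y = g \<otimes> (inv g \<otimes> (y \<otimes> x \<otimes> inv y) \<otimes> g) \<otimes> inv g"
            using g x y by (simp add: m_assoc inv_cancel_left' inv_cancel_left'')
          then show "y \<otimes> x \<otimes> inv y = g \<otimes> x \<otimes> inv g" using h by simp
        next
          assume h: "y \<otimes> x \<otimes> inv y = g \<otimes> x \<otimes> inv g"
          show "inv g \<otimes> (y \<otimes> x \<otimes> inv y) \<otimes> g = x" unfolding h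
            using g x by (simp add: m_assoc inv_cancel_left' inv_cancel_left'')
        qed
        with e show ?thesis by simp
      qed
      show ?thesis
      proof
        show "{w \<in> inv g <# F. w \<otimes> x \<otimes> inv w = x} \<subseteq> (\<lambda>y. inv g \<otimes> y) ` {y\<in>F. y \<otimes> x \<otimes> inv y = g \<otimes> x \<otimes> inv g}"
        proof
          fix w assume "w \<in> {w \<in> inv g <# F. w \<otimes> x \<otimes> inv w = x}"
          then obtain y where y: "y \<in> F" "w = inv g \<otimes> y" and wx: "w \<otimes> x \<otimes> inv w = x"
            unfolding l_coset_def by blast
          have "y \<otimes> x \<otimes> inv y = g \<otimes> x \<otimes> inv g" using key[of y] y wx F by blast
          then show "w \<in> (\<lambda>y. inv g \<otimes> y) ` {y\<in>F. y \<otimes> x \<otimes> inv y = g \<otimes> x \<otimes> inv g}"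
            using y by blast
        qed
        show "(\<lambda>y. inv g \<otimes> y) ` {y\<in>F. y \<otimes> x \<otimes> inv y = g \<otimes> x \<otimes> inv g} \<subseteq> {w \<in> inv g <# F. w \<otimes> x \<otimes> inv w = x}"
        proof
          fix w assume "w \<in> (\<lambda>y. inv g \<otimes> y) ` {y\<in>F. y \<otimes> x \<otimes> inv y = g \<otimes> x \<otimes> inv g}"
          then obtain y where y: "y \<in> F" "w = inv g \<otimes> y" and yx: "y \<otimes> x \<otimes> inv y = g \<otimes> x \<otimes> inv g"
            by blast
          have "w \<otimes> x \<otimes> inv w = x" using key[of y] y yx F by blast
          moreover have "w \<in> inv g <# F" unfolding l_coset_def using y by blast
          ultimately show "w \<in> {w \<in> inv g <# F. w \<otimes> x \<otimes> inv w = x}" by blast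
        qed
      qed
    qed
    moreover have "inj_on (\<lambda>y. inv g \<otimes> y) {y\<in>F. y \<otimes> x \<otimes> inv y = g \<otimes> x \<otimes> inv g}"
      using F g by (intro inj_lmult) auto
    ultimately show ?thesis by (simp add: card_image)
  qed
  have eq2: "{y\<in>F. x \<otimes> y = y \<otimes> x} = {w \<in> F. w \<otimes> x \<otimes> inv w = x}"
    using F x comm_iff_conj by auto
  show ?thesis unfolding eq1 eq2
    by (rule card_filter_diff) (use F l_coset_finite in auto)
qed

lemma bad_card:
  assumes F: "finite F" "F \<subseteq> carrier G" and g: "g \<in> carrier G"
  shows "card {x\<in>F. g \<otimes> x \<otimes> inv g \<notin> F}
    \<le> card (sym_diff_set (g <# F) F) + card (sym_diff_set (F #> inv g) F)"
proof -
  define A1 where "A1 = {x\<in>F. g \<otimes> x \<notin> F}"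
  define A2 where "A2 = {x\<in>F. g \<otimes> x \<in> F \<and> g \<otimes> x \<otimes> inv g \<notin> F}"
  have sub: "{x\<in>F. g \<otimes> x \<otimes> inv g \<notin> F} \<subseteq> A1 \<union> A2"
    unfolding A1_def A2_def by blast
  have c1: "card A1 \<le> card (sym_diff_set (g <# F) F)"
  proof -
    have "(\<lambda>x. g \<otimes> x) ` A1 \<subseteq> sym_diff_set (g <# F) F"
    proof
      fix w assume "w \<in> (\<lambda>x. g \<otimes> x) ` A1"
      then obtain x where x: "x \<in> F" "g \<otimes> x \<notin> F" "w = g \<otimes> x" unfolding A1_def by blast
      have "w \<in> g <# F" unfolding l_coset_def using x by blast
      then show "w \<in> sym_diff_set (g <# F) F" unfolding sym_diff_set_def using x by blast
    qed
    moreover have "inj_on (\<lambda>x. g \<otimes> x) A1" using F g unfolding A1_def by (intro inj_lmult) auto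
    moreover have "finite (sym_diff_set (g <# F) F)"
      unfolding sym_diff_set_def using F l_coset_finite by auto
    ultimately show ?thesis using card_image card_mono by metis
  qed
  have c2: "card A2 \<le> card (sym_diff_set (F #> inv g) F)"
  proof -
    have "(\<lambda>w. w \<otimes> inv g) ` ((\<lambda>x. g \<otimes> x) ` A2) \<subseteq> sym_diff_set (F #> inv g) F"
    proof
      fix w assume "w \<in> (\<lambda>w. w \<otimes> inv g) ` ((\<lambda>x. g \<otimes> x) ` A2)"
      then obtain x where x: "x \<in> F" "g \<otimes> x \<in> F" "g \<otimes> x \<otimes> inv g \<notin> F" "w = g \<otimes> x \<otimes> inv g"
        unfolding A2_def by blast
      have "w \<in> F #> inv g" unfolding r_coset_def using x by blast
      then show "w \<in> sym_diff_set (F #> inv g) F" unfolding sym_diff_set_def using x by blast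
    qed
    moreover have i1: "inj_on (\<lambda>x. g \<otimes> x) A2" using F g unfolding A2_def by (intro inj_lmult) auto
    moreover have i2: "inj_on (\<lambda>w. w \<otimes> inv g) ((\<lambda>x. g \<otimes> x) ` A2)"
    proof (rule inj_onI)
      fix u v assume u: "u \<in> (\<lambda>x. g \<otimes> x) ` A2" and v: "v \<in> (\<lambda>x. g \<otimes> x) ` A2"
        and e: "u \<otimes> inv g = v \<otimes> inv g"
      have "u \<in> carrier G" "v \<in> carrier G" using u v F g unfolding A2_def by auto
      then show "u = v" using e g r_cancel[of "inv g" u v] by simp
    qed
    moreover have "finite (sym_diff_set (F #> inv g) F)"
      unfolding sym_diff_set_def using F r_coset_finite by auto
    ultimately have "card ((\<lambda>w. w \<otimes> inv g) ` ((\<lambda>x. g \<otimes> x) ` A2)) \<le> card (sym_diff_set (F #> inv g) F)"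
      using card_mono by blast
    moreover have "card ((\<lambda>w. w \<otimes> inv g) ` ((\<lambda>x. g \<otimes> x) ` A2)) = card A2"
      using i1 i2 by (simp add: card_image)
    ultimately show ?thesis by simp
  qed
  have fin: "finite (A1 \<union> A2)" unfolding A1_def A2_def using F by auto
  have "card {x\<in>F. g \<otimes> x \<otimes> inv g \<notin> F} \<le> card (A1 \<union> A2)"
    by (rule card_mono[OF fin sub])
  also have "\<dots> \<le> card A1 + card A2" by (rule card_Un_le)
  finally show ?thesis using c1 c2 by linarith
qed

end



lemma arith1:
  fixes N k s d :: real
  assumes "N > 0" "k \<ge> 1" "\<bar>N - k * s\<bar> \<le> k * d * N"
  shows "\<bar>s / N - 1 / k\<bar> \<le> d"
proof -
  have "s / N - 1 / k = (k * s - N) / (k * N)" using assms by (simp add: field_simps)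
  then have "\<bar>s / N - 1 / k\<bar> = \<bar>N - k * s\<bar> / (k * N)" using assms by (simp add: abs_minus_commute)
  also have "\<dots> \<le> (k * d * N) / (k * N)" using assms by (intro divide_right_mono) auto
  also have "\<dots> = d" using assms by simp
  finally show ?thesis .
qed

lemma arith2:
  fixes N k s d c :: real and M :: nat
  assumes "N > 0" "k \<ge> real (Suc M)" "k * (s - d * N) \<le> N" "s \<ge> 0" "d \<ge> 0"
    "c \<ge> real (Suc M)"
  shows "\<bar>s / N - 1 / c\<bar> \<le> d + 1 / real (Suc M)"
proof -
  have kp: "k > 0" using assms(2) by (smt (verit) of_nat_0_less_iff zero_less_Suc)
  have "s - d * N \<le> N / k" using assms kp by (simp add: field_simps mult.commute)
  also have "N / k \<le> N / real (Suc M)" using assms kp by (intro divide_left_mono) auto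
  finally have "s / N \<le> d + 1 / real (Suc M)" using assms by (simp add: field_simps)
  moreover have "1 / c \<le> 1 / real (Suc M)" using assms by (intro divide_left_mono) auto
  moreover have "s / N \<ge> 0" "1 / c \<ge> 0" using assms by auto
  ultimately show ?thesis using assms(5) unfolding abs_le_iff by linarith
qed

context group begin

lemma per_x_good:
  assumes F: "finite F" "F \<noteq> {}" "F \<subseteq> carrier G"
    and K: "finite K" "K \<subseteq> carrier G"
    and x: "x \<in> F"
    and Kx: "(\<lambda>g. g \<otimes> x \<otimes> inv g) ` K = conj_class G x \<or> card ((\<lambda>g. g \<otimes> x \<otimes> inv g) ` K) \<ge> Suc M"
    and d: "d \<ge> 0"
    and lf: "\<forall>g\<in>K. real (card (sym_diff_set (inv g <# F) F)) \<le> d * real (card F)"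
    and good: "\<forall>g\<in>K. g \<otimes> x \<otimes> inv g \<in> F"
  shows "\<bar>real (card {y\<in>F. x \<otimes> y = y \<otimes> x}) / real (card F) - 1 / real (card (conj_class G x \<inter> F))\<bar>
          \<le> d + 1 / real (Suc M)"
proof -
  define \<phi> where "\<phi> = (\<lambda>g. g \<otimes> x \<otimes> inv g)"
  define V where "V = \<phi> ` K"
  define s where "s = real (card {y\<in>F. x \<otimes> y = y \<otimes> x})"
  define N where "N = real (card F)"
  define fib where "fib = (\<lambda>z. {y\<in>F. \<phi> y = z})"
  have xc: "x \<in> carrier G" using x F by auto
  have Np: "N > 0" unfolding N_def using F by (simp add: card_gt_0_iff)
  have s0: "s \<ge> 0" unfolding s_def by simp
  have Vfin: "finite V" unfolding V_def using K by auto
  have VF: "V \<subseteq> F" unfolding V_def \<phi>_def using good by auto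
  have Vcc: "V \<subseteq> conj_class G x" unfolding V_def \<phi>_def conj_class_def using K by auto
  have fibs: "\<bar>real (card (fib z)) - s\<bar> \<le> d * N" if "z \<in> V" for z
  proof -
    obtain g where g: "g \<in> K" "z = \<phi> g" using \<open>z \<in> V\<close> unfolding V_def by auto
    have "\<bar>real (card (fib z)) - s\<bar> \<le> real (card (sym_diff_set (inv g <# F) F))"
      unfolding fib_def s_def g \<phi>_def using fiber_card[of F g x] F g K xc by auto
    also have "\<dots> \<le> d * N" using lf g unfolding N_def by auto
    finally show ?thesis .
  qed
  have disj: "card (\<Union>z\<in>V. fib z) = (\<Sum>z\<in>V. card (fib z))"
    by (rule card_UN_disjoint) (use Vfin F in \<open>auto simp: fib_def\<close>)
  have sumdiff: "\<bar>(\<Sum>z\<in>V. real (card (fib z))) - real (card V) * s\<bar> \<le> real (card V) * (d * N)"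
  proof -
    have "(\<Sum>z\<in>V. real (card (fib z))) - real (card V) * s = (\<Sum>z\<in>V. real (card (fib z)) - s)"
      by (simp add: sum_subtractf)
    then have "\<bar>(\<Sum>z\<in>V. real (card (fib z))) - real (card V) * s\<bar> \<le> (\<Sum>z\<in>V. \<bar>real (card (fib z)) - s\<bar>)"
      by (simp add: sum_abs)
    also have "\<dots> \<le> (\<Sum>z\<in>V. d * N)" by (rule sum_mono) (use fibs in auto)
    finally show ?thesis by simp
  qed
  show ?thesis
  proof (cases "V = conj_class G x")
    case True
    have ccF: "conj_class G x \<inter> F = V" using True VF by auto
    have U: "(\<Union>z\<in>V. fib z) = F"
    proof
      show "(\<Union>z\<in>V. fib z) \<subseteq> F" unfolding fib_def by auto
      show "F \<subseteq> (\<Union>z\<in>V. fib z)"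
      proof
        fix y assume y: "y \<in> F"
        then have "\<phi> y \<in> V" unfolding True \<phi>_def conj_class_def using F by auto
        then show "y \<in> (\<Union>z\<in>V. fib z)" unfolding fib_def using y by auto
      qed
    qed
    have "x \<in> V" using True conj_class_self xc by auto
    then have "card V > 0" using Vfin card_gt_0_iff by blast
    then have k1: "real (card V) \<ge> 1" by simp
    have "\<bar>N - real (card V) * s\<bar> \<le> real (card V) * d * N"
      using sumdiff disj U unfolding N_def by (simp add: mult.assoc)
    then have "\<bar>s / N - 1 / real (card V)\<bar> \<le> d" by (rule arith1[OF Np k1])
    moreover have "0 \<le> 1 / real (Suc M)" by simp
    ultimately show ?thesis unfolding ccF s_def[symmetric] N_def[symmetric] by linarith
  next
    case False
    then have kM: "card V \<ge> Suc M" using Kx unfolding V_def \<phi>_def by auto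
    have "(\<Union>z\<in>V. fib z) \<subseteq> F" unfolding fib_def by auto
    then have "card (\<Union>z\<in>V. fib z) \<le> card F" using F by (intro card_mono) auto
    then have le: "(\<Sum>z\<in>V. real (card (fib z))) \<le> N" using disj unfolding N_def
      by (metis of_nat_le_iff of_nat_sum)
    have "real (card V) * (s - d * N) \<le> N" using le sumdiff by (simp add: algebra_simps)
    moreover have "card (conj_class G x \<inter> F) \<ge> card V"
      using VF Vcc F by (intro card_mono) auto
    ultimately show ?thesis unfolding s_def[symmetric] N_def[symmetric]
      using arith2[OF Np _ _ s0 d, of M "real (card V)" "real (card (conj_class G x \<inter> F))"] kM
      by simp
  qed
qed

end



context group begin

lemma B_identity:
  assumes F: "finite F" "F \<subseteq> carrier G"
  shows "real (card {C \<in> conj_classes G. C \<inter> F \<noteq> {}}) = (\<Sum>x\<in>F. 1 / real (card (conj_class G x \<inter> F)))"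
proof -
  have eq: "{C \<in> conj_classes G. C \<inter> F \<noteq> {}} = conj_class G ` F"
  proof
    show "{C \<in> conj_classes G. C \<inter> F \<noteq> {}} \<subseteq> conj_class G ` F"
    proof
      fix C assume "C \<in> {C \<in> conj_classes G. C \<inter> F \<noteq> {}}"
      then obtain x y where x: "x \<in> carrier G" "C = conj_class G x" and y: "y \<in> C" "y \<in> F"
        unfolding conj_classes_def by auto
      have "conj_class G y = C" using conj_class_mem_eq[OF x(1)] x y by auto
      then show "C \<in> conj_class G ` F" using y by auto
    qed
    show "conj_class G ` F \<subseteq> {C \<in> conj_classes G. C \<inter> F \<noteq> {}}"
      unfolding conj_classes_def using F conj_class_self by auto
  qed
  have "(\<Sum>x\<in>F. 1 / real (card (conj_class G x \<inter> F)))
      = (\<Sum>C\<in>conj_class G ` F. \<Sum>x\<in>{x\<in>F. conj_class G x = C}. 1 / real (card (conj_class G x \<inter> F)))"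
    by (rule sum.image_gen[OF F(1)])
  also have "\<dots> = (\<Sum>C\<in>conj_class G ` F. 1)"
  proof (rule sum.cong[OF refl])
    fix C assume "C \<in> conj_class G ` F"
    then obtain x0 where x0: "x0 \<in> F" "C = conj_class G x0" by auto
    have x0c: "x0 \<in> carrier G" using x0 F by auto
    have set: "{x\<in>F. conj_class G x = C} = C \<inter> F"
    proof
      show "{x\<in>F. conj_class G x = C} \<subseteq> C \<inter> F" using conj_class_self F by auto
      show "C \<inter> F \<subseteq> {x\<in>F. conj_class G x = C}"
        using conj_class_mem_eq[OF x0c] x0 by auto
    qed
    have ne: "card (C \<inter> F) > 0" using x0 conj_class_self[OF x0c] F by (auto simp: card_gt_0_iff)
    have "(\<Sum>x\<in>{x\<in>F. conj_class G x = C}. 1 / real (card (conj_class G x \<inter> F)))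
        = (\<Sum>x\<in>C \<inter> F. 1 / real (card (C \<inter> F)))"
      unfolding set
    proof (rule sum.cong[OF refl])
      fix x assume "x \<in> C \<inter> F"
      then have "conj_class G x = C" using set by blast
      then show "1 / real (card (conj_class G x \<inter> F)) = 1 / real (card (C \<inter> F))" by simp
    qed
    also have "\<dots> = 1" using ne by simp
    finally show "(\<Sum>x\<in>{x\<in>F. conj_class G x = C}. 1 / real (card (conj_class G x \<inter> F))) = 1" .
  qed
  also have "\<dots> = real (card (conj_class G ` F))" by simp
  finally show ?thesis unfolding eq by simp
qed

lemma A_identity:
  assumes F: "finite F"
  shows "card {(x, y) \<in> F \<times> F. x \<otimes> y = y \<otimes> x} = (\<Sum>x\<in>F. card {y\<in>F. x \<otimes> y = y \<otimes> x})"
proof -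
  have "{(x, y) \<in> F \<times> F. x \<otimes> y = y \<otimes> x} = Sigma F (\<lambda>x. {y\<in>F. x \<otimes> y = y \<otimes> x})" by auto
  then show ?thesis using F by (simp add: card_SigmaI)
qed

lemma aggregate:
  assumes F: "finite F" "F \<noteq> {}" "F \<subseteq> carrier G"
    and K: "finite K" "K \<subseteq> carrier G"
    and Kp: "\<forall>x\<in>carrier G. (\<lambda>g. g \<otimes> x \<otimes> inv g) ` K = conj_class G x \<or> card ((\<lambda>g. g \<otimes> x \<otimes> inv g) ` K) \<ge> Suc M"
    and d: "d \<ge> 0"
    and lf: "\<forall>g\<in>K. real (card (sym_diff_set (inv g <# F) F)) \<le> d * real (card F)"
    and bd: "\<forall>g\<in>K. real (card (sym_diff_set (g <# F) F)) + real (card (sym_diff_set (F #> inv g) F)) \<le> 2 * d * real (card F)"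
  shows "\<bar>real (card {(x, y) \<in> F \<times> F. x \<otimes> y = y \<otimes> x}) / (real (card F))\<^sup>2
          - real (card {C \<in> conj_classes G. C \<inter> F \<noteq> {}}) / real (card F)\<bar>
         \<le> d + 1 / real (Suc M) + 2 * real (card K) * d"
proof -
  define N where "N = real (card F)"
  define s where "s = (\<lambda>x. real (card {y\<in>F. x \<otimes> y = y \<otimes> x}))"
  define c where "c = (\<lambda>x. real (card (conj_class G x \<inter> F)))"
  define e where "e = (\<lambda>x. s x / N - 1 / c x)"
  define Bd where "Bd = (\<Union>g\<in>K. {x\<in>F. g \<otimes> x \<otimes> inv g \<notin> F})"
  have Np: "N > 0" unfolding N_def using F by (simp add: card_gt_0_iff)
  have eqA: "real (card {(x, y) \<in> F \<times> F. x \<otimes> y = y \<otimes> x}) / N\<^sup>2 = (\<Sum>x\<in>F. s x / N) / N"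
    unfolding A_identity[OF F(1)] s_def using Np by (simp add: power2_eq_square sum_divide_distrib)
  have eqB: "real (card {C \<in> conj_classes G. C \<inter> F \<noteq> {}}) / N = (\<Sum>x\<in>F. 1 / c x) / N"
    unfolding B_identity[OF F(1) F(3)] c_def by simp
  have diff: "real (card {(x, y) \<in> F \<times> F. x \<otimes> y = y \<otimes> x}) / N\<^sup>2
          - real (card {C \<in> conj_classes G. C \<inter> F \<noteq> {}}) / N = (\<Sum>x\<in>F. e x) / N"
    unfolding eqA eqB e_def by (simp add: sum_subtractf diff_divide_distrib)
  have e1: "\<bar>e x\<bar> \<le> 1" if x: "x \<in> F" for x
  proof -
    have "card {y\<in>F. x \<otimes> y = y \<otimes> x} \<le> card F" using F by (intro card_mono) auto
    then have "s x \<le> N" unfolding s_def N_def by simp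
    then have a: "s x / N \<le> 1" "s x / N \<ge> 0" using Np unfolding s_def by auto
    have xc: "x \<in> carrier G" using x F by auto
    have "card (conj_class G x \<inter> F) > 0" using x conj_class_self[OF xc] F by (auto simp: card_gt_0_iff)
    then have "c x \<ge> 1" unfolding c_def by simp
    then have b: "1 / c x \<le> 1" "1 / c x \<ge> 0" by auto
    show ?thesis unfolding e_def using a b by linarith
  qed
  have e2: "\<bar>e x\<bar> \<le> d + 1 / real (Suc M)" if x: "x \<in> F - Bd" for x
  proof -
    have xc: "x \<in> carrier G" using x F by auto
    have good: "\<forall>g\<in>K. g \<otimes> x \<otimes> inv g \<in> F" using x unfolding Bd_def by auto
    have xF: "x \<in> F" using x by blast
    have Kx: "(\<lambda>g. g \<otimes> x \<otimes> inv g) ` K = conj_class G x \<or> card ((\<lambda>g. g \<otimes> x \<otimes> inv g) ` K) \<ge> Suc M"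
      using Kp xc by blast
    show ?thesis unfolding e_def s_def c_def N_def
      by (rule per_x_good[OF F K xF Kx d lf good])
  qed
  have BdF: "Bd \<subseteq> F" unfolding Bd_def by auto
  have Bdfin: "finite Bd" using BdF F finite_subset by auto
  have cBd: "real (card Bd) \<le> real (card K) * (2 * d * N)"
  proof -
    have "card Bd \<le> (\<Sum>g\<in>K. card {x\<in>F. g \<otimes> x \<otimes> inv g \<notin> F})"
      unfolding Bd_def by (rule card_UN_le[OF K(1)])
    then have "real (card Bd) \<le> real (\<Sum>g\<in>K. card {x\<in>F. g \<otimes> x \<otimes> inv g \<notin> F})"
      by (simp only: of_nat_le_iff)
    also have "\<dots> = (\<Sum>g\<in>K. real (card {x\<in>F. g \<otimes> x \<otimes> inv g \<notin> F}))"
      by (rule of_nat_sum)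
    also have "\<dots> \<le> (\<Sum>g\<in>K. 2 * d * N)"
    proof (rule sum_mono)
      fix g assume g: "g \<in> K"
      have "card {x\<in>F. g \<otimes> x \<otimes> inv g \<notin> F}
        \<le> card (sym_diff_set (g <# F) F) + card (sym_diff_set (F #> inv g) F)"
        using bad_card[OF F(1) F(3)] g K by auto
      then have "real (card {x\<in>F. g \<otimes> x \<otimes> inv g \<notin> F})
        \<le> real (card (sym_diff_set (g <# F) F)) + real (card (sym_diff_set (F #> inv g) F))"
        by linarith
      also have "\<dots> \<le> 2 * d * N" using bd g unfolding N_def by auto
      finally show "real (card {x\<in>F. g \<otimes> x \<otimes> inv g \<notin> F}) \<le> 2 * d * N" .
    qed
    also have "\<dots> = real (card K) * (2 * d * N)" by simp
    finally show ?thesis .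
  qed
  have "\<bar>\<Sum>x\<in>F. e x\<bar> \<le> (\<Sum>x\<in>F. \<bar>e x\<bar>)" by (rule sum_abs)
  also have "\<dots> = (\<Sum>x\<in>F - Bd. \<bar>e x\<bar>) + (\<Sum>x\<in>Bd. \<bar>e x\<bar>)"
    by (rule sum.subset_diff[OF BdF F(1)])
  also have "\<dots> \<le> (\<Sum>x\<in>F - Bd. d + 1 / real (Suc M)) + (\<Sum>x\<in>Bd. 1)"
    apply (rule add_mono)
     apply (rule sum_mono) using e2 apply blast
    apply (rule sum_mono) using e1 BdF by blast
  also have "\<dots> = real (card (F - Bd)) * (d + 1 / real (Suc M)) + real (card Bd)" by simp
  also have "\<dots> \<le> N * (d + 1 / real (Suc M)) + real (card K) * (2 * d * N)"
  proof -
    have "card (F - Bd) \<le> card F" using F by (intro card_mono) auto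
    then have "real (card (F - Bd)) \<le> N" unfolding N_def by simp
    moreover have "d + 1 / real (Suc M) \<ge> 0" using d by simp
    ultimately show ?thesis using cBd by (intro add_mono mult_right_mono) auto
  qed
  finally have sumb: "\<bar>\<Sum>x\<in>F. e x\<bar> \<le> N * (d + 1 / real (Suc M)) + real (card K) * (2 * d * N)" .
  have "\<bar>(\<Sum>x\<in>F. e x) / N\<bar> = \<bar>\<Sum>x\<in>F. e x\<bar> / N" using Np by simp
  also have "\<dots> \<le> (N * (d + 1 / real (Suc M)) + real (card K) * (2 * d * N)) / N"
    using sumb Np by (intro divide_right_mono) auto
  also have "\<dots> = ((d + 1 / real (Suc M) + 2 * real (card K) * d) * N) / N"
    by (simp add: algebra_simps)
  also have "\<dots> = d + 1 / real (Suc M) + 2 * real (card K) * d" using Np by simp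
  finally show ?thesis using diff unfolding N_def by simp
qed

end



lemma limsup_eq_of_diff:
  fixes a b :: "nat \<Rightarrow> real"
  assumes "\<And>e. e > 0 \<Longrightarrow> eventually (\<lambda>n. \<bar>a n - b n\<bar> \<le> e) sequentially"
  shows "limsup (\<lambda>n. ereal (a n)) = limsup (\<lambda>n. ereal (b n))"
proof -
  have le: "limsup (\<lambda>n. ereal (a n)) \<le> limsup (\<lambda>n. ereal (b n))"
    if ev: "\<And>e. e > 0 \<Longrightarrow> eventually (\<lambda>n. \<bar>a n - b n\<bar> \<le> e) sequentially" for a b :: "nat \<Rightarrow> real"
  proof (rule ereal_le_epsilon2)
    fix e :: real assume "0 < e"
    have "limsup (\<lambda>n. ereal (a n)) \<le> limsup (\<lambda>n. ereal (b n) + ereal e)"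
      by (rule Limsup_mono) (use ev[OF \<open>0<e\<close>] in \<open>auto elim!: eventually_mono\<close>)
    also have "\<dots> = limsup (\<lambda>n. ereal (b n)) + ereal e"
      by (rule Limsup_add_ereal_right) auto
    finally show "limsup (\<lambda>n. ereal (a n)) \<le> limsup (\<lambda>n. ereal (b n)) + ereal e" .
  qed
  show ?thesis
    apply (rule antisym)
     apply (rule le, rule assms, assumption)
    apply (rule le)
    using assms by (metis (no_types, lifting) abs_minus_commute eventually_mono)
qed

lemma folner_eventually:
  assumes "(\<lambda>n. real (card (Y n)) / real (card (F n))) \<longlonglongrightarrow> 0" "d > 0"
    and "\<And>n. card (F n) > 0"
  shows "eventually (\<lambda>n. real (card (Y n)) \<le> d * real (card (F n))) sequentially"
proof -
  have "eventually (\<lambda>n. real (card (Y n)) / real (card (F n)) < d) sequentially"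
    using order_tendstoD(2)[OF assms(1)] assms(2) by simp
  then show ?thesis
  proof (rule eventually_mono)
    fix n assume "real (card (Y n)) / real (card (F n)) < d"
    then show "real (card (Y n)) \<le> d * real (card (F n))" using assms(3)[of n]
      by (simp add: divide_less_eq)
  qed
qed

context group begin

lemma main_thm:
  fixes F :: "nat \<Rightarrow> 'a set"
  assumes a2: "fin_gen_group G" and a4: "left_folner G F" and a5: "right_folner G F"
  shows "conj_ratio G F = deg_comm G F"
proof -
  obtain S where S: "finite S" "S \<subseteq> carrier G" "generate G S = carrier G"
    using a2 unfolding fin_gen_group_def by blast
  define T where "T = insert \<one> (S \<union> (\<lambda>s. inv s) ` S)"
  have Tc: "T \<subseteq> carrier G" "finite T" unfolding T_def using S by auto
  have Fs: "\<And>n. finite (F n) \<and> F n \<noteq> {} \<and> F n \<subseteq> carrier G"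
    using a4 unfolding left_folner_def fin_subset_seq_def by blast
  have Fpos: "\<And>n. card (F n) > 0" using Fs by (simp add: card_gt_0_iff)
  have LF: "\<And>x. x \<in> carrier G \<Longrightarrow>
      (\<lambda>n. real (card (sym_diff_set (x <# F n) (F n))) / real (card (F n))) \<longlonglongrightarrow> 0"
    using a4 unfolding left_folner_def by blast
  have RF: "\<And>x. x \<in> carrier G \<Longrightarrow>
      (\<lambda>n. real (card (sym_diff_set (F n #> x) (F n))) / real (card (F n))) \<longlonglongrightarrow> 0"
    using a5 unfolding right_folner_def by blast
  define A where "A = (\<lambda>n. real (card {(x, y) \<in> F n \<times> F n. x \<otimes> y = y \<otimes> x}) / (real (card (F n)))\<^sup>2)"
  define B where "B = (\<lambda>n. real (card {C \<in> conj_classes G. C \<inter> F n \<noteq> {}}) / real (card (F n)))"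
  have ev: "eventually (\<lambda>n. \<bar>A n - B n\<bar> \<le> e) sequentially" if e: "e > 0" for e
  proof -
    obtain M where M: "inverse (real (Suc M)) < e / 2"
      using reals_Archimedean[of "e/2"] e by auto
    define K where "K = ballG G T M"
    have K: "finite K" "K \<subseteq> carrier G" unfolding K_def using Tc ballG_finite ballG_sub by auto
    have Kp: "\<forall>x\<in>carrier G. (\<lambda>g. g \<otimes> x \<otimes> inv g) ` K = conj_class G x \<or> card ((\<lambda>g. g \<otimes> x \<otimes> inv g) ` K) \<ge> Suc M"
      unfolding K_def using conj_ball_lemma[OF S T_def] by blast
    define d where "d = e / (2 * (1 + 2 * real (card K)))"
    have d: "d > 0" unfolding d_def using e by simp
    have dbound: "d + 1 / real (Suc M) + 2 * real (card K) * d < e"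
    proof -
      have "d * (1 + 2 * real (card K)) = e / 2" unfolding d_def by (simp add: field_simps)
      then show ?thesis using M by (simp add: inverse_eq_divide algebra_simps)
    qed
    have ev1: "eventually (\<lambda>n. \<forall>g\<in>K. real (card (sym_diff_set (inv g <# F n) (F n))) \<le> d * real (card (F n))) sequentially"
      using K by (intro eventually_ball_finite ballI folner_eventually[OF _ d Fpos] LF) auto
    have ev2: "eventually (\<lambda>n. \<forall>g\<in>K. real (card (sym_diff_set (g <# F n) (F n))) \<le> d * real (card (F n))) sequentially"
      using K by (intro eventually_ball_finite ballI folner_eventually[OF _ d Fpos] LF) auto
    have ev3: "eventually (\<lambda>n. \<forall>g\<in>K. real (card (sym_diff_set (F n #> inv g) (F n))) \<le> d * real (card (F n))) sequentially"
      using K by (intro eventually_ball_finite ballI folner_eventually[OF _ d Fpos] RF) auto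
    show ?thesis
    proof (rule eventually_mono[OF eventually_conj[OF ev1 eventually_conj[OF ev2 ev3]]])
      fix n assume h: "(\<forall>g\<in>K. real (card (sym_diff_set (inv g <# F n) (F n))) \<le> d * real (card (F n))) \<and>
        (\<forall>g\<in>K. real (card (sym_diff_set (g <# F n) (F n))) \<le> d * real (card (F n))) \<and>
        (\<forall>g\<in>K. real (card (sym_diff_set (F n #> inv g) (F n))) \<le> d * real (card (F n)))"
      have bd: "\<forall>g\<in>K. real (card (sym_diff_set (g <# F n) (F n))) + real (card (sym_diff_set (F n #> inv g) (F n))) \<le> 2 * d * real (card (F n))"
        using h by fastforce
      have "\<bar>A n - B n\<bar> \<le> d + 1 / real (Suc M) + 2 * real (card K) * d"
        unfolding A_def B_def
        using aggregate[of "F n" K M d] Fs[of n] K Kp d h bd by auto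
      then show "\<bar>A n - B n\<bar> \<le> e" using dbound by linarith
    qed
  qed
  have "limsup (\<lambda>n. ereal (A n)) = limsup (\<lambda>n. ereal (B n))"
    by (rule limsup_eq_of_diff) (rule ev)
  then show ?thesis unfolding conj_ratio_def deg_comm_def A_def B_def by simp
qed


end

theorem theorem1p21:
  fixes G :: "('a, 'b) monoid_scheme" and F :: "nat \<Rightarrow> 'a set"
  assumes "group G" "fin_gen_group G" "amenable_group G"
    and "left_folner G F" "right_folner G F"
  shows "conj_ratio G F = deg_comm G F"
  using group.main_thm[OF assms(1) assms(2) assms(4) assms(5)] .

end
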